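(* Let $(X,U)$ be a minimizer of Problem 1 and let $(K,H,G,F)$ be the unique solution of $\begin{bmatrix} K & H \\ G & F \end{bmatrix}\begin{bmatrix} X \\ Z \end{bmatrix} = \begin{bmatrix} U \\ V \end{bmatrix}$. Fix $x_0\in\{\mathrm{e}_1,\dots,\mathrm{e}_n\}$ and let $u_{\mathcal{K}}^*=\big(u(0)^\top,\dots,u(N-1)^\top\big)^\top\in\mathbb{R}^{mN}$ be the input sequence generated by the closed loop of the plant $x(t+1)=Ax(t)+Bu(t)$, $x(0)=x_0$, with the compensator $z(t+1)=Fz(t)+Gx(t)$, $u(t)=Hz(t)+Kx(t)$, $z(0)=0$. Then $u_{\mathcal{K}}^*$ is an optimal solution $u^*$ of the open-loop $\ell_1$ optimal control problem $$\min_{u\in\mathbb{R}^{mN}}\ \sum_{t=0}^{N-1}\|u(t)\|_1\quad\text{s.t.}\quad \Phi_N u=-A^Nx_0,\quad -s\le Cx(t)+Du(t)\le s\ \ (t=0,\dots,N-1),$$ where $x(t)$ is the state generated by $u$ from $x_0$; i.e. $u^*=u_{\mathcal{K}}^*=Hz+Kx^*$.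
   Context: Plant: $x(t+1)=Ax(t)+Bu(t)$, $y(t)=Cx(t)+Du(t)$, with $x(t)\in\mathbb{R}^n$, $u(t)\in\mathbb{R}^m$ ($m\le n$), $y(t)\in\mathbb{R}^p$, $(A,B)$ reachable. $N\ge 2$ is a horizon such that the feasible sets are nonempty. $\Phi_N=[A^{N-1}B~\cdots~AB~B]\in\mathbb{R}^{n\times mN}$, assumed of full row rank $n$; the constraint $\Phi_Nu=-A^Nx_0$ is equivalent to $x(N)=0$. $\mathrm{e}_j$ denotes a standard basis vector. $P\in\mathbb{R}^{N\times N}$ is the nilpotent shift matrix $P=\begin{bmatrix}0 & 0\\ I_{N-1} & 0\end{bmatrix}$; $\otimes$ is the Kronecker product; $\|W\|_1=\sum_{i,j}|w_{ij}|$; $\mathrm{abs}(W)$ is entrywise absolute value; $\mathbf{1}_k$ is the all-ones vector of length $k$. Given $s\in\mathbb{R}^p$, Problem 1 is: minimize $\|U\|_1$ over $X\in\mathbb{R}^{n\times nN}$, $U\in\mathbb{R}^{m\times nN}$ subject to $AX+BU=X(P\otimes I_n)$, $X(\mathrm{e}_1\otimes I_n)=I_n$ ($\mathrm{e}_1\in\mathbb{R}^N$), and $\mathrm{abs}(CX+DU)\le s(\mathbf{1}_n\otimes\mathbf{1}_N)^\top$ entrywise. $Z=\begin{bmatrix}0_{n(N-1)\times n} & I_{n(N-1)}\end{bmatrix}$, $V=Z(P\otimes I_n)$. *)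

theory Defs
  imports "Jordan_Normal_Form.DL_Rank"
begin

definition kron :: "real mat \<Rightarrow> real mat \<Rightarrow> real mat" where
  "kron A B = mat (dim_row A * dim_row B) (dim_col A * dim_col B)
     (\<lambda>(i,j). A $$ (i div dim_row B, j div dim_col B) * B $$ (i mod dim_row B, j mod dim_col B))"

definition shiftP :: "nat \<Rightarrow> real mat" where
  "shiftP N = mat N N (\<lambda>(i,j). if i = j + 1 then 1 else 0)"

definition e1col :: "nat \<Rightarrow> real mat" where
  "e1col N = mat N 1 (\<lambda>(i,j). if i = 0 then 1 else 0)"

definition Zmat :: "nat \<Rightarrow> nat \<Rightarrow> real mat" where
  "Zmat n N = mat (n * (N - 1)) (n * N) (\<lambda>(i,j). if j = i + n then 1 else 0)"

definition Vmat :: "nat \<Rightarrow> nat \<Rightarrow> real mat" where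
  "Vmat n N = Zmat n N * kron (shiftP N) (1\<^sub>m n)"

definition mat_l1 :: "real mat \<Rightarrow> real" where
  "mat_l1 W = (\<Sum>i<dim_row W. \<Sum>j<dim_col W. \<bar>W $$ (i,j)\<bar>)"

(* Phi_N = [A^{N-1}B ... AB B] *)
definition PhiN :: "real mat \<Rightarrow> real mat \<Rightarrow> nat \<Rightarrow> real mat" where
  "PhiN A B N = mat (dim_row A) (dim_col B * N)
     (\<lambda>(i,j). ((A ^\<^sub>m (N - 1 - j div dim_col B)) * B) $$ (i, j mod dim_col B))"

definition reachable :: "real mat \<Rightarrow> real mat \<Rightarrow> bool" where
  "reachable A B = (vec_space.rank (dim_row A)
      (mat (dim_row A) (dim_col B * dim_row A)
        (\<lambda>(i,j). ((A ^\<^sub>m (j div dim_col B)) * B) $$ (i, j mod dim_col B))) = dim_row A)"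

definition problem1_feasible ::
  "real mat \<Rightarrow> real mat \<Rightarrow> real mat \<Rightarrow> real mat \<Rightarrow> real vec \<Rightarrow> nat \<Rightarrow> real mat \<Rightarrow> real mat \<Rightarrow> bool" where
  "problem1_feasible A B C D s N X U =
    (let n = dim_row A; m = dim_col B; p = dim_row C in
       X \<in> carrier_mat n (n * N) \<and> U \<in> carrier_mat m (n * N) \<and>
       A * X + B * U = X * kron (shiftP N) (1\<^sub>m n) \<and>
       X * kron (e1col N) (1\<^sub>m n) = 1\<^sub>m n \<and>
       (\<forall>i<p. \<forall>j<n * N. \<bar>(C * X + D * U) $$ (i,j)\<bar> \<le> s $ i))"

definition problem1_minimizer ::
  "real mat \<Rightarrow> real mat \<Rightarrow> real mat \<Rightarrow> real mat \<Rightarrow> real vec \<Rightarrow> nat \<Rightarrow> real mat \<Rightarrow> real mat \<Rightarrow> bool" where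
  "problem1_minimizer A B C D s N X U =
    (problem1_feasible A B C D s N X U \<and>
     (\<forall>X' U'. problem1_feasible A B C D s N X' U' \<longrightarrow> mat_l1 U \<le> mat_l1 U'))"

definition ublock :: "nat \<Rightarrow> real vec \<Rightarrow> nat \<Rightarrow> real vec" where
  "ublock m u t = vec m (\<lambda>i. u $ (m * t + i))"

fun ol_state :: "real mat \<Rightarrow> real mat \<Rightarrow> real vec \<Rightarrow> real vec \<Rightarrow> nat \<Rightarrow> real vec" where
  "ol_state A B x0 u 0 = x0"
| "ol_state A B x0 u (Suc t) = A *\<^sub>v ol_state A B x0 u t + B *\<^sub>v ublock (dim_col B) u t"

definition ol_feasible ::
  "real mat \<Rightarrow> real mat \<Rightarrow> real mat \<Rightarrow> real mat \<Rightarrow> real vec \<Rightarrow> nat \<Rightarrow> real vec \<Rightarrow> real vec \<Rightarrow> bool" where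
  "ol_feasible A B C D s N x0 u =
    (u \<in> carrier_vec (dim_col B * N) \<and>
     PhiN A B N *\<^sub>v u = - ((A ^\<^sub>m N) *\<^sub>v x0) \<and>
     (\<forall>t<N. \<forall>i<dim_row C.
        - (s $ i) \<le> (C *\<^sub>v ol_state A B x0 u t + D *\<^sub>v ublock (dim_col B) u t) $ i \<and>
        (C *\<^sub>v ol_state A B x0 u t + D *\<^sub>v ublock (dim_col B) u t) $ i \<le> s $ i))"

definition ol_cost :: "nat \<Rightarrow> nat \<Rightarrow> real vec \<Rightarrow> real" where
  "ol_cost m N u = (\<Sum>t<N. \<Sum>i<m. \<bar>u $ (m * t + i)\<bar>)"

definition ol_optimal ::
  "real mat \<Rightarrow> real mat \<Rightarrow> real mat \<Rightarrow> real mat \<Rightarrow> real vec \<Rightarrow> nat \<Rightarrow> real vec \<Rightarrow> real vec \<Rightarrow> bool" where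
  "ol_optimal A B C D s N x0 u =
    (ol_feasible A B C D s N x0 u \<and>
     (\<forall>u'. ol_feasible A B C D s N x0 u' \<longrightarrow> ol_cost (dim_col B) N u \<le> ol_cost (dim_col B) N u'))"

fun cl_state :: "real mat \<Rightarrow> real mat \<Rightarrow> real mat \<Rightarrow> real mat \<Rightarrow> real mat \<Rightarrow> real mat \<Rightarrow> real vec
                  \<Rightarrow> nat \<Rightarrow> real vec \<times> real vec" where
  "cl_state A B K H G F x0 0 = (x0, 0\<^sub>v (dim_row F))"
| "cl_state A B K H G F x0 (Suc t) =
     (let x = fst (cl_state A B K H G F x0 t); z = snd (cl_state A B K H G F x0 t);
          u = H *\<^sub>v z + K *\<^sub>v x
      in (A *\<^sub>v x + B *\<^sub>v u, F *\<^sub>v z + G *\<^sub>v x))"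

definition cl_input :: "real mat \<Rightarrow> real mat \<Rightarrow> real mat \<Rightarrow> real mat \<Rightarrow> real mat \<Rightarrow> real mat \<Rightarrow> real vec
                  \<Rightarrow> nat \<Rightarrow> real vec" where
  "cl_input A B K H G F x0 t =
     H *\<^sub>v snd (cl_state A B K H G F x0 t) + K *\<^sub>v fst (cl_state A B K H G F x0 t)"

definition cl_input_seq :: "real mat \<Rightarrow> real mat \<Rightarrow> real mat \<Rightarrow> real mat \<Rightarrow> real mat \<Rightarrow> real mat \<Rightarrow> real vec
                  \<Rightarrow> nat \<Rightarrow> real vec" where
  "cl_input_seq A B K H G F x0 N =
     vec (dim_col B * N) (\<lambda>k. cl_input A B K H G F x0 (k div dim_col B) $ (k mod dim_col B))"

end

theory Submission imports Defs begin

lemma shift_iff: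
  fixes l j n :: nat assumes "n > 0"
  shows "(l div n = j div n + 1 \<and> l mod n = j mod n) \<longleftrightarrow> l = j + n"
proof
  assume h: "l div n = j div n + 1 \<and> l mod n = j mod n"
  have "l = n * (l div n) + l mod n" by simp
  also have "\<dots> = n * (j div n) + j mod n + n" using h by (simp add: algebra_simps)
  also have "\<dots> = j + n" by simp
  finally show "l = j + n" .
next
  assume "l = j + n" thus "l div n = j div n + 1 \<and> l mod n = j mod n" using assms by simp
qed

lemma shift_entry:
  assumes M: "M \<in> carrier_mat r (n*N)" and a: "a < r" and j: "j < n*N"
  shows "(M * kron (shiftP N) (1\<^sub>m n)) $$ (a,j) = (if j+n < n*N then M $$ (a,j+n) else 0)"
proof -
  have n0: "n > 0" using j by (cases n) auto
  have dims: "dim_row (kron (shiftP N) (1\<^sub>m n)) = n*N" "dim_col (kron (shiftP N) (1\<^sub>m n)) = n*N"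
    by (auto simp: kron_def shiftP_def)
  have "(M * kron (shiftP N) (1\<^sub>m n)) $$ (a,j) = (\<Sum>l\<in>{0..<n*N}. M $$ (a,l) * kron (shiftP N) (1\<^sub>m n) $$ (l,j))"
    using M a j dims by (simp add: scalar_prod_def)
  also have "\<dots> = (\<Sum>l\<in>{0..<n*N}. if l = j + n then M $$ (a,l) else 0)"
  proof (rule sum.cong[OF refl])
    fix l assume l: "l \<in> {0..<n*N}"
    have ld: "l div n < N" "j div n < N" using l j n0
      by (auto simp: less_mult_imp_div_less mult.commute)
    have "kron (shiftP N) (1\<^sub>m n) $$ (l,j) = (if l = j + n then 1 else 0)"
      using l j ld n0 shift_iff[OF n0, of l j]
      by (auto simp: kron_def shiftP_def mult.commute)
    thus "M $$ (a,l) * kron (shiftP N) (1\<^sub>m n) $$ (l,j) = (if l = j + n then M $$ (a,l) else 0)" by simp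
  qed
  also have "\<dots> = (if j+n < n*N then M $$ (a,j+n) else 0)"
    by (simp add: sum.delta')
  finally show ?thesis .
qed

lemma e1_entry:
  assumes M: "M \<in> carrier_mat r (n*N)" and a: "a < r" and k: "k < n" and N0: "N > 0"
  shows "(M * kron (e1col N) (1\<^sub>m n)) $$ (a,k) = M $$ (a,k)"
proof -
  have dims: "dim_row (kron (e1col N) (1\<^sub>m n)) = n*N" "dim_col (kron (e1col N) (1\<^sub>m n)) = n"
    by (auto simp: kron_def e1col_def)
  have "(M * kron (e1col N) (1\<^sub>m n)) $$ (a,k) = (\<Sum>l\<in>{0..<n*N}. M $$ (a,l) * kron (e1col N) (1\<^sub>m n) $$ (l,k))"
    using M a k dims by (simp add: scalar_prod_def)
  also have "\<dots> = (\<Sum>l\<in>{0..<n*N}. if l = k then M $$ (a,l) else 0)"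
  proof (rule sum.cong[OF refl])
    fix l assume l: "l \<in> {0..<n*N}"
    have ld: "l div n < N" using l k
      by (auto simp: less_mult_imp_div_less mult.commute)
    have l2: "l < N*n" using l by (simp add: mult.commute)
    have "kron (e1col N) (1\<^sub>m n) $$ (l,k) = (if l = k then 1 else 0)"
    proof -
      have dm: "l div n = 0 \<Longrightarrow> l = l mod n" by (metis add_0 div_mult_mod_eq mult_zero_left)
      show ?thesis using l2 k ld dm by (auto simp: kron_def e1col_def)
    qed
    thus "M $$ (a,l) * kron (e1col N) (1\<^sub>m n) $$ (l,k) = (if l = k then M $$ (a,l) else 0)" by simp
  qed
  also have "\<dots> = M $$ (a,k)"
  proof -
    have "n \<le> n*N" using N0 by simp
    hence "k < n*N" using k by linarith
    thus ?thesis by (simp add: sum.delta')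
  qed
  finally show ?thesis .
qed


lemma pow_mat_Suc_left:
  assumes A: "A \<in> carrier_mat n n"
  shows "A ^\<^sub>m Suc k = A * A ^\<^sub>m k"
proof (induction k)
  case 0 show ?case using A by simp
next
  case (Suc k)
  have "A ^\<^sub>m Suc (Suc k) = (A * A ^\<^sub>m k) * A" using Suc by simp
  also have "\<dots> = A * (A ^\<^sub>m k * A)" using A by (simp add: assoc_mult_mat[of _ n n _ n _ n])
  finally show ?case by simp
qed

definition vsum :: "nat \<Rightarrow> (nat \<Rightarrow> real vec) \<Rightarrow> nat set \<Rightarrow> real vec" where
  "vsum n f S = vec n (\<lambda>a. \<Sum>s\<in>S. f s $ a)"

lemma mult_vsum:
  assumes A: "A \<in> carrier_mat r n" and f: "\<And>s. s \<in> S \<Longrightarrow> f s \<in> carrier_vec n"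
  shows "A *\<^sub>v vsum n f S = vsum r (\<lambda>s. A *\<^sub>v f s) S"
proof (rule eq_vecI)
  fix a assume "a < dim_vec (vsum r (\<lambda>s. A *\<^sub>v f s) S)"
  hence a: "a < r" by (simp add: vsum_def)
  have "(A *\<^sub>v vsum n f S) $ a = (\<Sum>b<n. A $$ (a,b) * (\<Sum>s\<in>S. f s $ b))"
    using A a by (simp add: vsum_def scalar_prod_def atLeast0LessThan)
  also have "\<dots> = (\<Sum>s\<in>S. \<Sum>b<n. A $$ (a,b) * f s $ b)"
    unfolding sum_distrib_left by (rule sum.swap)
  also have "\<dots> = (\<Sum>s\<in>S. (A *\<^sub>v f s) $ a)"
  proof (intro sum.cong refl)
    fix s assume "s \<in> S"
    hence "dim_vec (f s) = n" using f by auto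
    thus "(\<Sum>b<n. A $$ (a,b) * f s $ b) = (A *\<^sub>v f s) $ a"
      using A a by (auto simp: scalar_prod_def atLeast0LessThan)
  qed
  finally show "(A *\<^sub>v vsum n f S) $ a = vsum r (\<lambda>s. A *\<^sub>v f s) S $ a"
    using a by (simp add: vsum_def)
qed (use A in \<open>simp add: vsum_def\<close>)

lemma ublock_carrier[simp]: "ublock m u t \<in> carrier_vec m"
  by (simp add: ublock_def)

lemma ol_state_formula:
  assumes A: "A \<in> carrier_mat n n" and B: "B \<in> carrier_mat n m" and x0: "x0 \<in> carrier_vec n"
  shows "ol_state A B x0 u t = A ^\<^sub>m t *\<^sub>v x0 +
           vsum n (\<lambda>s. A ^\<^sub>m (t - 1 - s) *\<^sub>v (B *\<^sub>v ublock m u s)) {..<t}"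
proof (induction t)
  case 0
  show ?case using A x0 by (intro eq_vecI) (auto simp: vsum_def)
next
  case (Suc t)
  define w where "w s = B *\<^sub>v ublock m u s" for s
  have w: "w s \<in> carrier_vec n" for s using B by (simp add: w_def)
  have mB: "dim_col B = m" using B by simp
  have "ol_state A B x0 u (Suc t) = A *\<^sub>v (A ^\<^sub>m t *\<^sub>v x0 + vsum n (\<lambda>s. A ^\<^sub>m (t - 1 - s) *\<^sub>v w s) {..<t}) + w t"
    using Suc by (simp add: w_def mB)
  also have "\<dots> = A *\<^sub>v (A ^\<^sub>m t *\<^sub>v x0) + A *\<^sub>v vsum n (\<lambda>s. A ^\<^sub>m (t - 1 - s) *\<^sub>v w s) {..<t} + w t"
    using A x0 mult_mat_vec_carrier[OF pow_carrier_mat[OF A, of t] x0]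
    by (subst mult_add_distrib_mat_vec[of _ n n]) (auto simp: vsum_def)
  also have "A *\<^sub>v vsum n (\<lambda>s. A ^\<^sub>m (t - 1 - s) *\<^sub>v w s) {..<t} = vsum n (\<lambda>s. A *\<^sub>v (A ^\<^sub>m (t - 1 - s) *\<^sub>v w s)) {..<t}"
    using A w by (intro mult_vsum) (auto intro: mult_mat_vec_carrier[OF pow_carrier_mat[OF A]])
  also have "\<dots> = vsum n (\<lambda>s. A ^\<^sub>m (Suc t - 1 - s) *\<^sub>v w s) {..<t}"
  proof -
    have "A *\<^sub>v (A ^\<^sub>m (t - 1 - s) *\<^sub>v w s) = A ^\<^sub>m (Suc t - 1 - s) *\<^sub>v w s" if "s < t" for s
    proof -
      have "Suc t - 1 - s = Suc (t - 1 - s)" using that by simp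
      hence "A ^\<^sub>m (Suc t - 1 - s) = A * A ^\<^sub>m (t - 1 - s)" using pow_mat_Suc_left[OF A] by simp
      thus ?thesis using A w by (simp add: assoc_mult_mat_vec[of _ n n _ n])
    qed
    thus ?thesis by (simp add: vsum_def)
  qed
  also have "A *\<^sub>v (A ^\<^sub>m t *\<^sub>v x0) = A ^\<^sub>m Suc t *\<^sub>v x0"
    using A x0 pow_mat_Suc_left[OF A, of t] by (simp add: assoc_mult_mat_vec[of _ n n _ n])
  finally have calc: "ol_state A B x0 u (Suc t) = A ^\<^sub>m Suc t *\<^sub>v x0 + vsum n (\<lambda>s. A ^\<^sub>m (Suc t - 1 - s) *\<^sub>v w s) {..<t} + w t" .
  have vs: "vsum n (\<lambda>s. A ^\<^sub>m (Suc t - 1 - s) *\<^sub>v w s) {..<Suc t} = vsum n (\<lambda>s. A ^\<^sub>m (Suc t - 1 - s) *\<^sub>v w s) {..<t} + w t"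
  proof -
    have wd: "dim_vec (w s) = n" for s using w[of s] by auto
    show ?thesis using A w by (intro eq_vecI) (auto simp: vsum_def wd)
  qed
  have "ol_state A B x0 u (Suc t) = A ^\<^sub>m Suc t *\<^sub>v x0 + vsum n (\<lambda>s. A ^\<^sub>m (Suc t - 1 - s) *\<^sub>v w s) {..<Suc t}"
    unfolding calc vs
    using A x0 w by (intro assoc_add_vec[OF mult_mat_vec_carrier[OF pow_carrier_mat[OF A] x0]]) (auto simp: vsum_def)
  thus ?case by (simp add: w_def mB)
qed

lemma block_sum:
  fixes g :: "nat \<Rightarrow> real"
  shows "(\<Sum>j<m*N. g j) = (\<Sum>s<N. \<Sum>k<m. g (m*s+k))"
proof -
  have "(\<Sum>j<m*N. g j) = (\<Sum>s<N. sum g {s*m..<s*m+m})"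
    using sum.nat_group[of g m N] by (simp only: mult.commute[of N m])
  also have "\<dots> = (\<Sum>s<N. \<Sum>k<m. g (m*s+k))"
  proof (rule sum.cong[OF refl])
    fix s
    have e: "{s*m..<s*m+m} = {0+s*m..<m+s*m}" by (simp add: add.commute)
    have "sum g {s*m..<s*m+m} = (\<Sum>k\<in>{0..<m}. g (k + s*m))"
      unfolding e by (rule sum.shift_bounds_nat_ivl)
    also have "\<dots> = (\<Sum>k<m. g (m*s+k))"
      unfolding atLeast0LessThan by (intro sum.cong refl) (simp add: mult.commute add.commute)
    finally show "sum g {s*m..<s*m+m} = (\<Sum>k<m. g (m*s+k))" .
  qed
  finally show ?thesis .
qed

lemma Phi_formula:
  assumes A: "A \<in> carrier_mat n n" and B: "B \<in> carrier_mat n m" and u: "u \<in> carrier_vec (m*N)"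
  shows "PhiN A B N *\<^sub>v u = vsum n (\<lambda>s. A ^\<^sub>m (N - 1 - s) *\<^sub>v (B *\<^sub>v ublock m u s)) {..<N}"
proof (rule eq_vecI)
  fix a assume "a < dim_vec (vsum n (\<lambda>s. A ^\<^sub>m (N - 1 - s) *\<^sub>v (B *\<^sub>v ublock m u s)) {..<N})"
  hence a: "a < n" by (simp add: vsum_def)
  have "(PhiN A B N *\<^sub>v u) $ a = (\<Sum>j<m*N. (A ^\<^sub>m (N - 1 - j div m) * B) $$ (a, j mod m) * u $ j)"
  proof -
    have "(PhiN A B N *\<^sub>v u) $ a = (\<Sum>j\<in>{0..<m*N}. row (PhiN A B N) a $ j * u $ j)"
      using A B u a by (simp add: PhiN_def scalar_prod_def)
    also have "\<dots> = (\<Sum>j<m*N. (A ^\<^sub>m (N - 1 - j div m) * B) $$ (a, j mod m) * u $ j)"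
      unfolding atLeast0LessThan
      by (intro sum.cong refl) (use A B a in \<open>simp add: PhiN_def\<close>)
    finally show ?thesis .
  qed
  also have "\<dots> = (\<Sum>s<N. \<Sum>k<m. (A ^\<^sub>m (N - 1 - s) * B) $$ (a, k) * u $ (m*s+k))"
  proof -
    have dm: "(m*s+k) div m = s" "(m*s+k) mod m = k" if "k < m" for s k using that by auto
    show ?thesis by (subst block_sum) (intro sum.cong refl, simp add: dm)
  qed
  also have "\<dots> = (\<Sum>s<N. (A ^\<^sub>m (N - 1 - s) *\<^sub>v (B *\<^sub>v ublock m u s)) $ a)"
  proof (rule sum.cong[OF refl])
    fix s
    have "A ^\<^sub>m (N - 1 - s) *\<^sub>v (B *\<^sub>v ublock m u s) = (A ^\<^sub>m (N - 1 - s) * B) *\<^sub>v ublock m u s"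
      using A B by (simp add: assoc_mult_mat_vec[of _ n n _ m])
    thus "(\<Sum>k<m. (A ^\<^sub>m (N - 1 - s) * B) $$ (a, k) * u $ (m*s+k)) = (A ^\<^sub>m (N - 1 - s) *\<^sub>v (B *\<^sub>v ublock m u s)) $ a"
      using A B a by (simp add: scalar_prod_def atLeast0LessThan ublock_def)
  qed
  finally show "(PhiN A B N *\<^sub>v u) $ a = vsum n (\<lambda>s. A ^\<^sub>m (N - 1 - s) *\<^sub>v (B *\<^sub>v ublock m u s)) {..<N} $ a"
    using a by (simp add: vsum_def)
qed (use A in \<open>simp add: vsum_def PhiN_def\<close>)

lemma ol_state_N:
  assumes A: "A \<in> carrier_mat n n" and B: "B \<in> carrier_mat n m" and x0: "x0 \<in> carrier_vec n"
    and u: "u \<in> carrier_vec (m*N)"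
  shows "ol_state A B x0 u N = A ^\<^sub>m N *\<^sub>v x0 + PhiN A B N *\<^sub>v u"
  using ol_state_formula[OF A B x0] Phi_formula[OF A B u] by simp

lemma kron_shift_dims[simp]:
  "dim_row (kron (shiftP N) (1\<^sub>m n)) = n*N" "dim_col (kron (shiftP N) (1\<^sub>m n)) = n*N"
  by (auto simp: kron_def shiftP_def mult.commute)

lemma col_shift:
  assumes M: "M \<in> carrier_mat r (n*N)" and j: "j < n*N"
  shows "col (M * kron (shiftP N) (1\<^sub>m n)) j = (if j+n < n*N then col M (j+n) else 0\<^sub>v r)"
proof (rule eq_vecI)
  fix a assume "a < dim_vec (if j+n < n*N then col M (j+n) else 0\<^sub>v r)"
  hence a: "a < r" using M by (auto split: if_splits)
  show "col (M * kron (shiftP N) (1\<^sub>m n)) j $ a = (if j+n < n*N then col M (j+n) else 0\<^sub>v r) $ a"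
    using shift_entry[OF M a j] M a j by auto
qed (use M in auto)

lemma lt_block:
  fixes n N t i :: nat assumes "t < N" "i < n" shows "n*t+i < n*N"
proof -
  have "n * Suc t \<le> n*N" using assms(1) by (intro mult_le_mono2) simp
  thus ?thesis using assms(2) by simp
qed

lemma prod_col_entry:
  assumes "C \<in> carrier_mat p n" "D \<in> carrier_mat p m" "X \<in> carrier_mat n c" "U \<in> carrier_mat m c"
    "a < p" "j < c"
  shows "(C * X + D * U) $$ (a,j) = (C *\<^sub>v col X j + D *\<^sub>v col U j) $ a"
  using assms by simp

lemma ol_state_carrier:
  assumes A: "A \<in> carrier_mat n n" and B: "B \<in> carrier_mat n m" and x0: "x0 \<in> carrier_vec n"
  shows "ol_state A B x0 u t \<in> carrier_vec n"
  by (induction t) (use A B x0 in auto)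

lemma slice_sum:
  fixes f :: "nat \<Rightarrow> real" assumes i: "i < n"
  shows "(\<Sum>j<n*N. f j) = (\<Sum>j\<in>{..<n*N} - (\<lambda>t. n*t+i) ` {..<N}. f j) + (\<Sum>t<N. f (n*t+i))"
proof -
  have sub: "(\<lambda>t. n*t+i) ` {..<N} \<subseteq> {..<n*N}" using lt_block[OF _ i] by auto
  have inj: "inj_on (\<lambda>t. n*t+i) {..<N}" using i by (intro inj_onI) simp
  show ?thesis
    using sum.subset_diff[OF sub, of f] sum.reindex[OF inj, of f] by (simp add: comp_def)
qed

lemma slice_mem:
  fixes j n N i :: nat assumes "j < n*N" "j mod n = i"
  shows "j \<in> (\<lambda>t. n*t+i) ` {..<N}"
proof
  show "j = n*(j div n)+i" using assms(2) div_mult_mod_eq[of j n] by (simp add: mult.commute)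
  have "n > 0" using assms(1) by (cases n) auto
  thus "j div n \<in> {..<N}" using assms(1) by (simp add: less_mult_imp_div_less mult.commute)
qed

theorem corollary1:
  fixes A B C D X U K H G F :: "real mat" and s :: "real vec" and n m p N i :: nat
  assumes A: "A \<in> carrier_mat n n" and B: "B \<in> carrier_mat n m"
    and C: "C \<in> carrier_mat p n" and D: "D \<in> carrier_mat p m"
    and s: "s \<in> carrier_vec p"
    and mn: "m \<le> n" and N2: "N \<ge> 2"
    and reach: "reachable A B"
    and Phi_rank: "vec_space.rank n (PhiN A B N) = n"
    and minimizer: "problem1_minimizer A B C D s N X U"
    and K: "K \<in> carrier_mat m n" and H: "H \<in> carrier_mat m (n * (N - 1))"
    and G: "G \<in> carrier_mat (n * (N - 1)) n" and F: "F \<in> carrier_mat (n * (N - 1)) (n * (N - 1))"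
    and eq1: "K * X + H * Zmat n N = U"
    and eq2: "G * X + F * Zmat n N = Vmat n N"
    and i: "i < n"
  shows "ol_optimal A B C D s N (unit_vec n i) (cl_input_seq A B K H G F (unit_vec n i) N)"
proof -
  define x0 :: "real vec" where "x0 = unit_vec n i"
  define Z where "Z = Zmat n N"
  define Pk where "Pk = kron (shiftP N) (1\<^sub>m n)"
  have x0: "x0 \<in> carrier_vec n" by (simp add: x0_def)
  have dA: "dim_row A = n" using A by simp
  have dB: "dim_col B = m" using B by simp
  have dC: "dim_row C = p" using C by simp
  have N0: "N > 0" using N2 by simp
  have feas: "problem1_feasible A B C D s N X U" and opt: "\<And>X' U'. problem1_feasible A B C D s N X' U' \<Longrightarrow> mat_l1 U \<le> mat_l1 U'"
    using minimizer by (auto simp: problem1_minimizer_def)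
  have feas_iff: "problem1_feasible A B C D s N X' U' \<longleftrightarrow>
       X' \<in> carrier_mat n (n * N) \<and> U' \<in> carrier_mat m (n * N) \<and>
       A * X' + B * U' = X' * Pk \<and> X' * kron (e1col N) (1\<^sub>m n) = 1\<^sub>m n \<and>
       (\<forall>a<p. \<forall>j<n * N. \<bar>(C * X' + D * U') $$ (a,j)\<bar> \<le> s $ a)" for X' U'
    by (simp add: problem1_feasible_def Let_def dA dB dC Pk_def)
  have X: "X \<in> carrier_mat n (n*N)" and U: "U \<in> carrier_mat m (n*N)"
    and dyn: "A * X + B * U = X * Pk" and init: "X * kron (e1col N) (1\<^sub>m n) = 1\<^sub>m n"
    and cons: "\<And>a j. a < p \<Longrightarrow> j < n*N \<Longrightarrow> \<bar>(C * X + D * U) $$ (a,j)\<bar> \<le> s $ a"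
    using feas unfolding feas_iff by auto
  have Z: "Z \<in> carrier_mat (n*(N-1)) (n*N)" by (simp add: Z_def Zmat_def)
  have V: "Vmat n N = Z * Pk" by (simp add: Vmat_def Z_def Pk_def)
  have E1: "A *\<^sub>v col X j + B *\<^sub>v col U j = (if j+n < n*N then col X (j+n) else 0\<^sub>v n)" if j: "j < n*N" for j
  proof -
    have "A *\<^sub>v col X j + B *\<^sub>v col U j = col (A * X + B * U) j"
      using col_add[OF mult_carrier_mat[OF A X] mult_carrier_mat[OF B U] j] col_mult2[OF A X j] col_mult2[OF B U j] by simp
    also have "\<dots> = col (X * Pk) j" using dyn by simp
    also have "\<dots> = (if j+n < n*N then col X (j+n) else 0\<^sub>v n)"
      unfolding Pk_def by (rule col_shift[OF X j])
    finally show ?thesis .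
  qed
  have E2: "H *\<^sub>v col Z j + K *\<^sub>v col X j = col U j" if j: "j < n*N" for j
  proof -
    have "col U j = col (K * X + H * Z) j" using eq1 by (simp add: Z_def)
    also have "\<dots> = K *\<^sub>v col X j + H *\<^sub>v col Z j"
      using col_add[OF mult_carrier_mat[OF K X] mult_carrier_mat[OF H Z] j] col_mult2[OF K X j] col_mult2[OF H Z j] by simp
    finally show ?thesis using K H X Z j by (simp add: comm_add_vec[of _ m])
  qed
  have E3: "F *\<^sub>v col Z j + G *\<^sub>v col X j = (if j+n < n*N then col Z (j+n) else 0\<^sub>v (n*(N-1)))" if j: "j < n*N" for j
  proof -
    have "G *\<^sub>v col X j + F *\<^sub>v col Z j = col (G * X + F * Z) j"
      using col_add[OF mult_carrier_mat[OF G X] mult_carrier_mat[OF F Z] j] col_mult2[OF G X j] col_mult2[OF F Z j] by simp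
    also have "\<dots> = col (Z * Pk) j" using eq2 V by (simp add: Z_def)
    also have "\<dots> = (if j+n < n*N then col Z (j+n) else 0\<^sub>v (n*(N-1)))"
      unfolding Pk_def by (rule col_shift[OF Z j])
    finally show ?thesis using G F X Z j by (simp add: comm_add_vec[of _ "n*(N-1)"])
  qed
  have E4: "col X k = unit_vec n k" if k: "k < n" for k
  proof (rule eq_vecI)
    fix a assume "a < dim_vec (unit_vec n k)"
    hence a: "a < n" by simp
    have "X $$ (a,k) = (X * kron (e1col N) (1\<^sub>m n)) $$ (a,k)" using e1_entry[OF X a k N0] by simp
    also have "\<dots> = 1\<^sub>m n $$ (a,k)" using init by simp
    moreover have "k < n*N" using k N0 lt_block[OF N0 k] by simp
    ultimately show "col X k $ a = unit_vec n k $ a" using a k X by simp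
  qed (use X in simp)
  have E5: "col Z k = 0\<^sub>v (n*(N-1))" if k: "k < n" for k
  proof (rule eq_vecI)
    have "k < n*N" using k N0 lt_block[OF N0 k] by simp
    thus "col Z k $ a = 0\<^sub>v (n*(N-1)) $ a" if "a < dim_vec (0\<^sub>v (n*(N-1)) :: real vec)" for a
      using that k by (simp add: Z_def Zmat_def)
  qed (simp add: Z_def Zmat_def)
  have blk: "n*t+i < n*N" if "t < N" for t using lt_block[OF that i] .
  have CL: "cl_state A B K H G F x0 t = (col X (n*t+i), col Z (n*t+i))" if "t < N" for t
    using that
  proof (induction t)
    case 0
    show ?case using E4[OF i] E5[OF i] F by (simp add: x0_def)
  next
    case (Suc t)
    hence t: "t < N" by simp
    define j where "j = n*t+i"
    have j: "j < n*N" using blk[OF t] by (simp add: j_def)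
    have jn: "j + n = n * Suc t + i" by (simp add: j_def)
    have jn2: "j + n < n*N" using blk[OF Suc.prems] jn by simp
    have "cl_state A B K H G F x0 (Suc t) =
        (A *\<^sub>v col X j + B *\<^sub>v (H *\<^sub>v col Z j + K *\<^sub>v col X j), F *\<^sub>v col Z j + G *\<^sub>v col X j)"
      using Suc.IH[OF t] by (simp add: Let_def j_def)
    also have "\<dots> = (col X (j+n), col Z (j+n))"
      using E1[OF j] E2[OF j] E3[OF j] jn2 by simp
    finally show ?case by (simp add: jn)
  qed
  have CI: "cl_input A B K H G F x0 t = col U (n*t+i)" if "t < N" for t
    using CL[OF that] E2[OF blk[OF that]] by (simp add: cl_input_def)
  define us where "us = cl_input_seq A B K H G F x0 N"
  have us: "us \<in> carrier_vec (m*N)" by (simp add: us_def cl_input_seq_def dB)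
  have UB: "ublock m us t = col U (n*t+i)" if t: "t < N" for t
  proof (rule eq_vecI)
    fix k assume "k < dim_vec (col U (n*t+i))"
    hence k: "k < m" using U by simp
    have mk: "m*t+k < m*N" using lt_block[OF t k] .
    have dm: "(m*t+k) div m = t" "(m*t+k) mod m = k" using k by auto
    show "ublock m us t $ k = col U (n*t+i) $ k"
      using mk dm k CI[OF t] by (simp add: ublock_def us_def cl_input_seq_def dB)
  qed (use U in \<open>simp add: ublock_def\<close>)
  have OS: "ol_state A B x0 us t = col X (n*t+i)" if "t < N" for t
    using that
  proof (induction t)
    case 0
    show ?case using E4[OF i] by (simp add: x0_def)
  next
    case (Suc t)
    hence t: "t < N" by simp
    have "ol_state A B x0 us (Suc t) = A *\<^sub>v col X (n*t+i) + B *\<^sub>v col U (n*t+i)"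
      using Suc.IH[OF t] UB[OF t] by (simp add: dB)
    also have "\<dots> = col X (n * Suc t + i)"
      using E1[OF blk[OF t]] blk[OF Suc.prems] by (simp add: add.commute add.left_commute)
    finally show ?case .
  qed
  have NN: "n*(N-1)+n = n*N" using N0 by (cases N) simp_all
  have OSN: "ol_state A B x0 us N = 0\<^sub>v n"
  proof -
    have N1: "N - 1 < N" using N0 by simp
    have "ol_state A B x0 us N = ol_state A B x0 us (Suc (N-1))" using N0 by simp
    also have "\<dots> = A *\<^sub>v col X (n*(N-1)+i) + B *\<^sub>v col U (n*(N-1)+i)"
      using OS[OF N1] UB[OF N1] by (simp add: dB)
    also have "\<dots> = 0\<^sub>v n"
      using E1[OF blk[OF N1]] NN by simp
    finally show ?thesis .
  qed
  have dPhi: "dim_vec (PhiN A B N *\<^sub>v v) = n" for v by (simp add: PhiN_def dA)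
  have Phi_us: "PhiN A B N *\<^sub>v us = - (A ^\<^sub>m N *\<^sub>v x0)"
  proof (rule eq_vecI)
    have h: "A ^\<^sub>m N *\<^sub>v x0 + PhiN A B N *\<^sub>v us = 0\<^sub>v n"
      using ol_state_N[OF A B x0 us] OSN by simp
    fix a assume "a < dim_vec (- (A ^\<^sub>m N *\<^sub>v x0))"
    hence a: "a < n" using A by simp
    have "(A ^\<^sub>m N *\<^sub>v x0 + PhiN A B N *\<^sub>v us) $ a = 0" using h a by simp
    thus "(PhiN A B N *\<^sub>v us) $ a = (- (A ^\<^sub>m N *\<^sub>v x0)) $ a"
      using a A dPhi[of us] by simp
  qed (use A dPhi in simp)
  have feas_us: "ol_feasible A B C D s N x0 us"
    unfolding ol_feasible_def
  proof (intro conjI allI impI)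
    show "us \<in> carrier_vec (dim_col B * N)" using us by (simp add: dB)
    show "PhiN A B N *\<^sub>v us = - (A ^\<^sub>m N *\<^sub>v x0)" by (rule Phi_us)
    fix t a assume t: "t < N" and a: "a < dim_row C"
    have "(C *\<^sub>v ol_state A B x0 us t + D *\<^sub>v ublock (dim_col B) us t) $ a = (C * X + D * U) $$ (a, n*t+i)"
      using OS[OF t] UB[OF t] prod_col_entry[OF C D X U _ blk[OF t]] a dC by (simp add: dB)
    moreover have "\<bar>(C * X + D * U) $$ (a, n*t+i)\<bar> \<le> s $ a" using cons a blk[OF t] dC by simp
    ultimately show "- (s $ a) \<le> (C *\<^sub>v ol_state A B x0 us t + D *\<^sub>v ublock (dim_col B) us t) $ a"
      and "(C *\<^sub>v ol_state A B x0 us t + D *\<^sub>v ublock (dim_col B) us t) $ a \<le> s $ a"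
      by (simp_all add: abs_le_iff)
  qed
  have "ol_cost m N us \<le> ol_cost m N u'" if f': "ol_feasible A B C D s N x0 u'" for u'
  proof -
    have u': "u' \<in> carrier_vec (m*N)" and Phi': "PhiN A B N *\<^sub>v u' = - (A ^\<^sub>m N *\<^sub>v x0)"
      and cons': "\<And>t a. t < N \<Longrightarrow> a < p \<Longrightarrow>
         - (s $ a) \<le> (C *\<^sub>v ol_state A B x0 u' t + D *\<^sub>v ublock m u' t) $ a \<and>
         (C *\<^sub>v ol_state A B x0 u' t + D *\<^sub>v ublock m u' t) $ a \<le> s $ a"
      using f' unfolding ol_feasible_def by (auto simp: dB dC)
    define y where "y = ol_state A B x0 u'"
    have y: "y t \<in> carrier_vec n" for t unfolding y_def by (rule ol_state_carrier[OF A B x0])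
    have yd: "dim_vec (y t) = n" for t using y[of t] by simp
    have yN: "y N = 0\<^sub>v n"
    proof (rule eq_vecI)
      fix a assume "a < dim_vec (0\<^sub>v n :: real vec)"
      hence a: "a < n" by simp
      have "y N = A ^\<^sub>m N *\<^sub>v x0 + - (A ^\<^sub>m N *\<^sub>v x0)"
        using ol_state_N[OF A B x0 u'] Phi' by (simp add: y_def)
      thus "y N $ a = 0\<^sub>v n $ a" using a A by simp
    qed (simp add: yd)
    have ysuc: "y (Suc t) = A *\<^sub>v y t + B *\<^sub>v ublock m u' t" for t by (simp add: y_def dB)
    define X' where "X' = mat n (n*N) (\<lambda>(a,j). if j mod n = i then y (j div n) $ a else X $$ (a,j))"
    define U' where "U' = mat m (n*N) (\<lambda>(a,j). if j mod n = i then ublock m u' (j div n) $ a else U $$ (a,j))"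
    have X': "X' \<in> carrier_mat n (n*N)" by (simp add: X'_def)
    have U': "U' \<in> carrier_mat m (n*N)" by (simp add: U'_def)
    have cX': "col X' j = (if j mod n = i then y (j div n) else col X j)" if j: "j < n*N" for j
      using j X by (intro eq_vecI) (auto simp: X'_def yd)
    have cU': "col U' j = (if j mod n = i then ublock m u' (j div n) else col U j)" if j: "j < n*N" for j
      using j U by (intro eq_vecI) (auto simp: U'_def ublock_def)
    have dyn': "A * X' + B * U' = X' * Pk"
    proof (rule mat_col_eqI)
      fix j assume "j < dim_col (X' * Pk)"
      hence j: "j < n*N" by (simp add: Pk_def)
      have n0: "n > 0" using i by simp
      have L: "col (A * X' + B * U') j = A *\<^sub>v col X' j + B *\<^sub>v col U' j"
        using col_add[OF mult_carrier_mat[OF A X'] mult_carrier_mat[OF B U'] j] col_mult2[OF A X' j] col_mult2[OF B U' j] by simp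
      have R: "col (X' * Pk) j = (if j+n < n*N then col X' (j+n) else 0\<^sub>v n)"
        unfolding Pk_def by (rule col_shift[OF X' j])
      have md: "(j+n) mod n = j mod n" "(j+n) div n = Suc (j div n)" using n0 by simp_all
      show "col (A * X' + B * U') j = col (X' * Pk) j"
      proof (cases "j mod n = i")
        case True
        have "col (A * X' + B * U') j = y (Suc (j div n))" using L cX'[OF j] cU'[OF j] True ysuc by simp
        moreover have "y (Suc (j div n)) = (if j+n < n*N then col X' (j+n) else 0\<^sub>v n)"
        proof (cases "j + n < n*N")
          case True2: True
          thus ?thesis using cX'[OF True2] md True by simp
        next
          case False
          have "j div n < N" using j n0 by (simp add: less_mult_imp_div_less mult.commute)
          moreover have "N \<le> Suc (j div n)"
          proof -
            have "(n*N) div n \<le> (j+n) div n" using False by (intro div_le_mono) simp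
            thus ?thesis using n0 md by simp
          qed
          ultimately have "Suc (j div n) = N" by simp
          thus ?thesis using yN False by simp
        qed
        ultimately show ?thesis using R by simp
      next
        case False
        have "col (A * X' + B * U') j = A *\<^sub>v col X j + B *\<^sub>v col U j" using L cX'[OF j] cU'[OF j] False by simp
        also have "\<dots> = (if j+n < n*N then col X (j+n) else 0\<^sub>v n)" by (rule E1[OF j])
        also have "\<dots> = col (X' * Pk) j" using R cX' md False by auto
        finally show ?thesis .
      qed
    qed (use A B X' U' in \<open>simp_all add: Pk_def\<close>)
    have init': "X' * kron (e1col N) (1\<^sub>m n) = 1\<^sub>m n"
    proof (rule eq_matI)
      fix a k assume "a < dim_row (1\<^sub>m n :: real mat)" "k < dim_col (1\<^sub>m n :: real mat)"
      hence a: "a < n" and k: "k < n" by auto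
      have kN: "k < n*N" using lt_block[OF N0 k] by simp
      have "(X' * kron (e1col N) (1\<^sub>m n)) $$ (a,k) = X' $$ (a,k)" by (rule e1_entry[OF X' a k N0])
      also have "\<dots> = 1\<^sub>m n $$ (a,k)"
      proof (cases "k = i")
        case True
        thus ?thesis using a k kN by (simp add: X'_def y_def x0_def)
      next
        case False
        have "X' $$ (a,k) = X $$ (a,k)" using a k kN False by (simp add: X'_def)
        also have "\<dots> = (X * kron (e1col N) (1\<^sub>m n)) $$ (a,k)" using e1_entry[OF X a k N0] by simp
        also have "\<dots> = 1\<^sub>m n $$ (a,k)" using init by simp
        finally show ?thesis .
      qed
      finally show "(X' * kron (e1col N) (1\<^sub>m n)) $$ (a,k) = 1\<^sub>m n $$ (a,k)" .
    qed (simp_all add: kron_def e1col_def X'_def)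
    have cons'': "\<bar>(C * X' + D * U') $$ (a,j)\<bar> \<le> s $ a" if a: "a < p" and j: "j < n*N" for a j
    proof (cases "j mod n = i")
      case True
      have n0: "n > 0" using i by simp
      have t: "j div n < N" using j n0 by (simp add: less_mult_imp_div_less mult.commute)
      have "(C * X' + D * U') $$ (a,j) = (C *\<^sub>v y (j div n) + D *\<^sub>v ublock m u' (j div n)) $ a"
        using prod_col_entry[OF C D X' U' a j] cX'[OF j] cU'[OF j] True by simp
      thus ?thesis using cons'[OF t a] by (simp add: y_def abs_le_iff)
    next
      case False
      have "(C * X' + D * U') $$ (a,j) = (C * X + D * U) $$ (a,j)"
        using prod_col_entry[OF C D X' U' a j] prod_col_entry[OF C D X U a j] cX'[OF j] cU'[OF j] False by simp
      thus ?thesis using cons[OF a j] by simp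
    qed
    have "problem1_feasible A B C D s N X' U'"
      unfolding feas_iff using X' U' dyn' init' cons'' by blast
    hence le: "mat_l1 U \<le> mat_l1 U'" by (rule opt)
    define S where "S = (\<lambda>t. n*t+i) ` {..<N}"
    have split: "mat_l1 W = (\<Sum>a<m. \<Sum>j\<in>{..<n*N} - S. \<bar>W $$ (a,j)\<bar>) + (\<Sum>t<N. \<Sum>a<m. \<bar>W $$ (a, n*t+i)\<bar>)"
      if W: "W \<in> carrier_mat m (n*N)" for W
    proof -
      have "mat_l1 W = (\<Sum>a<m. \<Sum>j<n*N. \<bar>W $$ (a,j)\<bar>)" using W by (simp add: mat_l1_def)
      also have "\<dots> = (\<Sum>a<m. (\<Sum>j\<in>{..<n*N} - S. \<bar>W $$ (a,j)\<bar>) + (\<Sum>t<N. \<bar>W $$ (a, n*t+i)\<bar>))"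
        unfolding S_def by (intro sum.cong refl slice_sum[OF i])
      also have "\<dots> = (\<Sum>a<m. \<Sum>j\<in>{..<n*N} - S. \<bar>W $$ (a,j)\<bar>) + (\<Sum>a<m. \<Sum>t<N. \<bar>W $$ (a, n*t+i)\<bar>)"
        by (simp add: sum.distrib)
      also have "(\<Sum>a<m. \<Sum>t<N. \<bar>W $$ (a, n*t+i)\<bar>) = (\<Sum>t<N. \<Sum>a<m. \<bar>W $$ (a, n*t+i)\<bar>)"
        by (rule sum.swap)
      finally show ?thesis .
    qed
    have rest: "(\<Sum>a<m. \<Sum>j\<in>{..<n*N} - S. \<bar>U' $$ (a,j)\<bar>) = (\<Sum>a<m. \<Sum>j\<in>{..<n*N} - S. \<bar>U $$ (a,j)\<bar>)"
    proof (intro sum.cong refl)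
      fix a j assume a: "a \<in> {..<m}" and jS: "j \<in> {..<n*N} - S"
      hence "j mod n \<noteq> i" using slice_mem[of j n N i] by (auto simp: S_def)
      thus "\<bar>U' $$ (a,j)\<bar> = \<bar>U $$ (a,j)\<bar>" using a jS by (simp add: U'_def)
    qed
    have cu: "(\<Sum>t<N. \<Sum>a<m. \<bar>U $$ (a, n*t+i)\<bar>) = ol_cost m N us"
      unfolding ol_cost_def
    proof (intro sum.cong refl)
      fix t a assume t: "t \<in> {..<N}" and a: "a \<in> {..<m}"
      have "us $ (m*t+a) = ublock m us t $ a" using a by (simp add: ublock_def)
      also have "\<dots> = U $$ (a, n*t+i)" using UB t a U blk[of t] by simp
      finally show "\<bar>U $$ (a, n*t+i)\<bar> = \<bar>us $ (m*t+a)\<bar>" by simp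
    qed
    have cu': "(\<Sum>t<N. \<Sum>a<m. \<bar>U' $$ (a, n*t+i)\<bar>) = ol_cost m N u'"
      unfolding ol_cost_def
    proof (intro sum.cong refl)
      fix t a assume t: "t \<in> {..<N}" and a: "a \<in> {..<m}"
      have md: "(n*t+i) mod n = i" "(n*t+i) div n = t" using i by simp_all
      show "\<bar>U' $$ (a, n*t+i)\<bar> = \<bar>u' $ (m*t+a)\<bar>"
        using t a blk[of t] md by (simp add: U'_def ublock_def)
    qed
    show ?thesis using le split[OF U] split[OF U'] rest cu cu' by simp
  qed
  thus ?thesis using feas_us unfolding ol_optimal_def by (simp add: dB x0_def us_def)
qed

end
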